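(* Let $S=\{1,2\}$ and let $\mathcal{F}$ be the family of finite disjoint unions of $S$-colored chains whose colors alternate along the chain. For $i\in S$, $n\ge1$, let $L(i,n)$ be the alternating chain with $n$ elements whose maximal element (root) is colored $i$. Then in $\mathfrak{n}_{\mathcal{F}}$ with bracket $[x,y]=x\rhd y-y\rhd x$: $[\delta_{L(i,2k)},\delta_{L(j,2l)}]=0$; $[\delta_{L(i,2k)},\delta_{L(j,2l+1)}]=-\delta_{L(j,2(k+l)+1)}$ if $i=j$ and $=\delta_{L(j,2(k+l)+1)}$ if $i\ne j$; $[\delta_{L(i,2k+1)},\delta_{L(j,2l+1)}]=\delta_{L(j,2(k+l+1))}-\delta_{L(i,2(k+l+1))}$. Moreover the linear map $\phi:\mathfrak{n}_{\mathcal{F}}\to L\mathfrak{gl}_2^+$ given by $\phi(\delta_{L(1,2k+1)})=e\otimes t^k$, $\phi(\delta_{L(2,2k+1)})=f\otimes t^{k+1}$ $(k\ge0)$, $\phi(\delta_{L(1,2k)})=-h_1\otimes t^k$, $\phi(\delta_{L(2,2k)})=-h_2\otimes t^k$ $(k\ge1)$ is an isomorphism of Lie algebras.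
   Context: $\mathfrak{n}_{\mathcal{F}}$ is the $\mathbb{Q}$-vector space with basis $\delta_P$, $P$ ranging over isomorphism classes of connected members of $\mathcal{F}$, with product $\delta_a\rhd\delta_b=\sum_{t} n(a,b,t)\delta_t$ (sum over connected $t\in\mathcal{F}$ up to isomorphism), where $n(a,b,t)$ is the number of covering relations $x\lessdot y$ in $t$ such that $\{z\in t: z\le x\}\cong a$ and its complement $\cong b$ as colored posets (i.e. the number of ways $t$ is obtained by grafting the maximal element (root) of $a$ directly below an element of $b$). In $\mathfrak{gl}_2$ over $\mathbb{Q}$: $e=E_{1,2}$, $f=E_{2,1}$, $h_1=E_{1,1}$, $h_2=E_{2,2}$. $L\mathfrak{gl}_2=\mathfrak{gl}_2\otimes\mathbb{Q}[t,t^{-1}]$ with $[X\otimes t^m,Y\otimes t^n]=[X,Y]\otimes t^{m+n}$, and $L\mathfrak{gl}_2^+=\mathbb{Q}e\oplus(\mathfrak{gl}_2\otimes t\mathbb{Q}[t])$. *)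

theory Defs
  imports "HOL-Analysis.Analysis"
begin

type_synonym cposet = "nat set \<times> (nat \<Rightarrow> nat \<Rightarrow> bool) \<times> (nat \<Rightarrow> nat)"

definition cp_carrier :: "cposet \<Rightarrow> nat set" where "cp_carrier P = fst P"
definition cp_le :: "cposet \<Rightarrow> nat \<Rightarrow> nat \<Rightarrow> bool" where "cp_le P = fst (snd P)"
definition cp_col :: "cposet \<Rightarrow> nat \<Rightarrow> nat" where "cp_col P = snd (snd P)"

definition cp_restr :: "cposet \<Rightarrow> nat set \<Rightarrow> cposet" where
  "cp_restr P S = (S, cp_le P, cp_col P)"

definition cp_iso :: "cposet \<Rightarrow> cposet \<Rightarrow> bool" where
  "cp_iso P Q \<longleftrightarrow> (\<exists>g. bij_betw g (cp_carrier P) (cp_carrier Q) \<and>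
     (\<forall>x\<in>cp_carrier P. \<forall>y\<in>cp_carrier P. cp_le P x y \<longleftrightarrow> cp_le Q (g x) (g y)) \<and>
     (\<forall>x\<in>cp_carrier P. cp_col P x = cp_col Q (g x)))"

definition cp_covers :: "cposet \<Rightarrow> nat \<Rightarrow> nat \<Rightarrow> bool" where
  "cp_covers P x y \<longleftrightarrow> x \<in> cp_carrier P \<and> y \<in> cp_carrier P \<and> cp_le P x y \<and> x \<noteq> y \<and>
     \<not> (\<exists>z\<in>cp_carrier P. cp_le P x z \<and> cp_le P z y \<and> z \<noteq> x \<and> z \<noteq> y)"

definition cp_down :: "cposet \<Rightarrow> nat \<Rightarrow> nat set" where
  "cp_down P x = {z \<in> cp_carrier P. cp_le P z x}"

definition ngraft :: "cposet \<Rightarrow> cposet \<Rightarrow> cposet \<Rightarrow> nat" where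
  "ngraft a b t = card {(x, y). cp_covers t x y \<and>
       cp_iso (cp_restr t (cp_down t x)) a \<and>
       cp_iso (cp_restr t (cp_carrier t - cp_down t x)) b}"

definition other_col :: "nat \<Rightarrow> nat" where "other_col i = 3 - i"

definition Lch :: "nat \<Rightarrow> nat \<Rightarrow> cposet" where
  "Lch i n = ({0..<n}, (\<le>), (\<lambda>k. if even (n - 1 - k) then i else other_col i))"

text \<open>Index set of the basis of n_F: isomorphism classes of connected members of F,
  represented by the chains L(i,n), i in {1,2}, n \<ge> 1.\<close>
definition Idx :: "(nat \<times> nat) set" where
  "Idx = {(i, n). i \<in> {1, 2} \<and> 1 \<le> n}"

definition Lp :: "nat \<times> nat \<Rightarrow> cposet" where "Lp p = Lch (fst p) (snd p)"

definition supp :: "('a \<Rightarrow> 'b::zero) \<Rightarrow> 'a set" where "supp x = {p. x p \<noteq> 0}"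

definition nF :: "(nat \<times> nat \<Rightarrow> rat) set" where
  "nF = {x. finite (supp x) \<and> supp x \<subseteq> Idx}"

definition delta :: "nat \<times> nat \<Rightarrow> nat \<times> nat \<Rightarrow> rat" where
  "delta q = (\<lambda>p. if p = q then 1 else 0)"

definition prelie :: "(nat \<times> nat \<Rightarrow> rat) \<Rightarrow> (nat \<times> nat \<Rightarrow> rat) \<Rightarrow> (nat \<times> nat \<Rightarrow> rat)" where
  "prelie x y = (\<lambda>t. if t \<in> Idx then
      (\<Sum>a\<in>supp x. \<Sum>b\<in>supp y. x a * y b * of_nat (ngraft (Lp a) (Lp b) (Lp t))) else 0)"

definition nbracket :: "(nat \<times> nat \<Rightarrow> rat) \<Rightarrow> (nat \<times> nat \<Rightarrow> rat) \<Rightarrow> (nat \<times> nat \<Rightarrow> rat)" where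
  "nbracket x y = (\<lambda>t. prelie x y t - prelie y x t)"

definition Emat :: "2 \<Rightarrow> 2 \<Rightarrow> rat^2^2" where
  "Emat i j = (\<chi> a b. if a = i \<and> b = j then 1 else 0)"

definition e_gl :: "rat^2^2" where "e_gl = Emat 1 2"
definition f_gl :: "rat^2^2" where "f_gl = Emat 2 1"
definition h1_gl :: "rat^2^2" where "h1_gl = Emat 1 1"
definition h2_gl :: "rat^2^2" where "h2_gl = Emat 2 2"

definition smat :: "rat \<Rightarrow> rat^2^2 \<Rightarrow> rat^2^2" where
  "smat c M = (\<chi> a b. c * M $ a $ b)"

text \<open>An element of L gl_2 is X :: int \<Rightarrow> gl_2 with finite support,
  standing for sum_m X m \<otimes> t^m.\<close>
definition Lgl2 :: "(int \<Rightarrow> rat^2^2) set" where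
  "Lgl2 = {X. finite (supp X)}"

definition Lbracket :: "(int \<Rightarrow> rat^2^2) \<Rightarrow> (int \<Rightarrow> rat^2^2) \<Rightarrow> (int \<Rightarrow> rat^2^2)" where
  "Lbracket X Y = (\<lambda>m. \<Sum>p\<in>supp X. X p ** Y (m - p) - Y (m - p) ** X p)"

definition Lgl2plus :: "(int \<Rightarrow> rat^2^2) set" where
  "Lgl2plus = {X \<in> Lgl2. (\<forall>m<0. X m = 0) \<and> (\<exists>c. X 0 = smat c e_gl)}"

definition single_loop :: "int \<Rightarrow> rat^2^2 \<Rightarrow> (int \<Rightarrow> rat^2^2)" where
  "single_loop m M = (\<lambda>p. if p = m then M else 0)"

definition phib :: "nat \<times> nat \<Rightarrow> (int \<Rightarrow> rat^2^2)" where
  "phib p = (let i = fst p; n = snd p in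
     if odd n then
       (if i = 1 then single_loop (int ((n - 1) div 2)) e_gl
        else single_loop (int ((n - 1) div 2) + 1) f_gl)
     else
       (if i = 1 then single_loop (int (n div 2)) (- h1_gl)
        else single_loop (int (n div 2)) (- h2_gl)))"

definition phi :: "(nat \<times> nat \<Rightarrow> rat) \<Rightarrow> (int \<Rightarrow> rat^2^2)" where
  "phi x = (\<lambda>m. \<Sum>a\<in>supp x. smat (x a) (phib a m))"

end

theory Submission
  imports Defs
begin


lemma other_col_simps[simp]: "other_col 1 = 2" "other_col 2 = 1" "other_col (Suc 0) = 2"
  by (simp_all add: other_col_def)

lemma Lch_parts[simp]: "cp_carrier (Lch i n) = {0..<n}" "cp_le (Lch i n) = (\<le>)"
  by (simp_all add: Lch_def cp_carrier_def cp_le_def cp_col_def)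

lemma Lch_col: "cp_col (Lch i n) z = (if even (n - 1 - z) then i else other_col i)"
  by (simp_all add: Lch_def cp_carrier_def cp_le_def cp_col_def)

lemma restr_parts[simp]: "cp_carrier (cp_restr P S) = S" "cp_le (cp_restr P S) = cp_le P"
  "cp_col (cp_restr P S) = cp_col P"
  by (simp_all add: cp_restr_def cp_carrier_def cp_le_def cp_col_def)

lemma par_col: "other_col (other_col k) = k \<Longrightarrow> (if even (d+u) then k else other_col k) =
  (if even u then (if even d then k else other_col k) else other_col (if even d then k else other_col k))"
  by auto

lemma chain_iso:
  assumes k: "k \<in> {1,2}" and i: "i \<in> {1,2}" and sm: "s + m \<le> n" and m: "1 \<le> m"
  shows "cp_iso (cp_restr (Lch k n) {s..<s+m}) (Lch i m') \<longleftrightarrow>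
         (m' = m \<and> cp_col (Lch k n) (s+m-1) = i)"
proof
  assume "cp_iso (cp_restr (Lch k n) {s..<s+m}) (Lch i m')"
  then obtain g where bij: "bij_betw g {s..<s+m} {0..<m'}"
    and ord: "\<forall>x\<in>{s..<s+m}. \<forall>y\<in>{s..<s+m}. x \<le> y \<longleftrightarrow> g x \<le> g y"
    and col: "\<forall>x\<in>{s..<s+m}. cp_col (Lch k n) x = cp_col (Lch i m') (g x)"
    unfolding cp_iso_def restr_parts Lch_parts by blast
  have mm: "m' = m" using bij_betw_same_card[OF bij] by simp
  have top: "s+m-1 \<in> {s..<s+m}" using m by auto
  have gt: "g (s+m-1) \<in> {0..<m}" using bij top mm by (auto dest: bij_betw_apply)
  have "m - 1 \<le> g (s+m-1)"
  proof -
    have "m - 1 \<in> {0..<m'}" using m mm by auto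
    then obtain z where z: "z \<in> {s..<s+m}" "g z = m - 1"
      using bij by (metis bij_betw_def imageE)
    then have "z \<le> s+m-1" by auto
    then have "g z \<le> g (s+m-1)" using ord z(1) top by blast
    then show ?thesis using z by simp
  qed
  then have "g (s+m-1) = m - 1" using gt by auto
  moreover have "cp_col (Lch k n) (s+m-1) = cp_col (Lch i m') (g (s+m-1))" using col top by blast
  ultimately show "m' = m \<and> cp_col (Lch k n) (s+m-1) = i"
    using mm m by (simp add: Lch_col)
next
  assume h: "m' = m \<and> cp_col (Lch k n) (s+m-1) = i"
  have bij: "bij_betw (\<lambda>z. z - s) {s..<s+m} {0..<m'}"
    by (rule bij_betw_byWitness[where f'="\<lambda>z. z + s"]) (use h in auto)
  have col: "\<forall>x\<in>{s..<s+m}. cp_col (Lch k n) x = cp_col (Lch i m') (x - s)"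
  proof
    fix x assume x: "x \<in> {s..<s+m}"
    have e: "n - 1 - x = (n - s - m) + (m - 1 - (x - s))" using x sm by auto
    have hi: "i = (if even (n-s-m) then k else other_col k)"
      using h sm m by (simp add: Lch_col)
    have oo: "other_col (other_col k) = k" using k by auto
    have l: "cp_col (Lch k n) x = (if even ((n - s - m) + (m - 1 - (x - s))) then k else other_col k)"
      by (simp only: Lch_col e)
    have r: "cp_col (Lch i m') (x - s) = (if even (m - 1 - (x - s)) then i else other_col i)"
      using h by (simp only: Lch_col)
    show "cp_col (Lch k n) x = cp_col (Lch i m') (x - s)"
      unfolding l r by (simp only: hi) (rule par_col[OF oo])
  qed
  have ord: "\<forall>x\<in>{s..<s+m}. \<forall>y\<in>{s..<s+m}. x \<le> y \<longleftrightarrow> x - s \<le> y - s" by auto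
  show "cp_iso (cp_restr (Lch k n) {s..<s+m}) (Lch i m')"
    unfolding cp_iso_def restr_parts Lch_parts using bij ord col by blast
qed

lemma covers_Lch: "cp_covers (Lch k n) x y \<longleftrightarrow> (y < n \<and> y = x+1)"
proof
  assume h: "cp_covers (Lch k n) x y"
  then have a: "x < n" "y < n" "x < y" and nz: "\<not> (\<exists>z\<in>{0..<n}. x \<le> z \<and> z \<le> y \<and> z \<noteq> x \<and> z \<noteq> y)"
    unfolding cp_covers_def Lch_parts by auto
  show "y < n \<and> y = x+1"
  proof (rule ccontr)
    assume "\<not> (y < n \<and> y = x+1)"
    then have "x + 1 < y" using a by auto
    then have "x + 1 \<in> {0..<n}" "x \<le> x + 1" "x + 1 \<le> y" "x + 1 \<noteq> x" "x + 1 \<noteq> y" using a by auto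
    then show False using nz by blast
  qed
next
  assume "y < n \<and> y = x+1"
  then show "cp_covers (Lch k n) x y" unfolding cp_covers_def Lch_parts by auto
qed

lemma down_Lch: "x < n \<Longrightarrow> cp_down (Lch k n) x = {0..<0+(x+1)}"
  unfolding cp_down_def Lch_parts by auto

lemma col_choice: "i \<in> {1,2} \<Longrightarrow> j \<in> {1,2} \<Longrightarrow>
   ((if even q then j else other_col j) = i) \<longleftrightarrow> (even q \<longleftrightarrow> i = j)"
  by auto

lemma ngraft_Lch:
  assumes i: "i \<in> {1,2}" and j: "j \<in> {1,2}" and k: "k \<in> {1,2}" and p: "1 \<le> p" and q: "1 \<le> q"
  shows "ngraft (Lch i p) (Lch j q) (Lch k n) = (if n = p+q \<and> k = j \<and> (even q \<longleftrightarrow> i = j) then 1 else 0)"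
proof -
  let ?t = "Lch k n"
  define S where "S = {(x, y). cp_covers ?t x y \<and>
       cp_iso (cp_restr ?t (cp_down ?t x)) (Lch i p) \<and>
       cp_iso (cp_restr ?t (cp_carrier ?t - cp_down ?t x)) (Lch j q)}"
  have mem: "(x,y) \<in> S \<longleftrightarrow> (y < n \<and> y = x+1 \<and> p = x+1 \<and> cp_col ?t x = i \<and> q = n - (x+1) \<and> k = j)" for x y
  proof (cases "y < n \<and> y = x+1")
    case False then show ?thesis by (auto simp: S_def covers_Lch)
  next
    case True
    then have xn: "x < n" by auto
    have c: "cp_carrier ?t - cp_down ?t x = {(x+1)..<(x+1)+(n-(x+1))}"
      using xn by (auto simp: down_Lch)
    have i1: "cp_iso (cp_restr ?t (cp_down ?t x)) (Lch i p) \<longleftrightarrow> (p = x+1 \<and> cp_col ?t x = i)"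
      unfolding down_Lch[OF xn] using chain_iso[OF k i, of 0 "x+1" n p] xn by simp
    have i2: "cp_iso (cp_restr ?t (cp_carrier ?t - cp_down ?t x)) (Lch j q) \<longleftrightarrow> (q = n-(x+1) \<and> k = j)"
      unfolding c using chain_iso[OF k j, of "x+1" "n-(x+1)" n q] xn True q
      by (auto simp: Lch_col)
    show ?thesis unfolding S_def using True i1 i2 by (simp add: covers_Lch)
  qed
  have "S = (if n = p+q \<and> k = j \<and> (even q \<longleftrightarrow> i = j) then {(p-1,p)} else {})"
  proof (cases "n = p+q \<and> k = j \<and> (even q \<longleftrightarrow> i = j)")
    case True
    have "cp_col ?t (p-1) = i" using True p col_choice[OF i j, of q] by (simp add: Lch_col)
    then have pm: "(x,y) \<in> S \<longleftrightarrow> (x = p-1 \<and> y = p)" for x y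
      unfolding mem using True p q by auto
    have "S = {(p-1,p)}"
    proof (rule set_eqI)
      fix z show "z \<in> S \<longleftrightarrow> z \<in> {(p-1,p)}" by (cases z) (simp only: pm, simp)
    qed
    then show ?thesis using True by simp
  next
    case False
    have nm: False if "(x,y) \<in> S" for x y
    proof -
      have h: "y < n \<and> y = x+1 \<and> p = x+1 \<and> cp_col ?t x = i \<and> q = n - (x+1) \<and> k = j" using iffD1[OF mem that] .
      then have np: "n = p + q" "n - 1 - x = q" by auto
      have cc: "cp_col ?t x = (if even q then k else other_col k)" using np(2) by (simp add: Lch_col)
      have kj: "k = j" and ci: "cp_col ?t x = i" using h by blast+
      have "(if even q then k else other_col k) = i" using cc ci by simp
      then have "(if even q then j else other_col j) = i" using kj by (cases "even q") auto
      then have "even q \<longleftrightarrow> i = j" using col_choice[OF i j] by blast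
      then show False using False h np by blast
    qed
    have "S = {}" using nm by fast
    then show ?thesis using False by simp
  qed
  then show ?thesis unfolding ngraft_def S_def[symmetric] by simp
qed

lemma supp_delta[simp]: "supp (delta q) = {q}"
  by (auto simp: supp_def delta_def)

lemma Idx_iff: "(i, n) \<in> Idx \<longleftrightarrow> i \<in> {1,2} \<and> 1 \<le> n"
  by (simp add: Idx_def)

definition Gf :: "nat \<times> nat \<Rightarrow> nat \<times> nat \<Rightarrow> nat \<times> nat \<Rightarrow> rat" where
  "Gf a b t = (if snd t = snd a + snd b \<and> fst t = fst b \<and> (even (snd b) \<longleftrightarrow> fst a = fst b) then 1 else 0)"

lemma ngraft_Idx:
  assumes "a \<in> Idx" "b \<in> Idx" "t \<in> Idx"
  shows "of_nat (ngraft (Lp a) (Lp b) (Lp t)) = Gf a b t"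
proof -
  obtain i p where a: "a = (i,p)" by (cases a)
  obtain j q where b: "b = (j,q)" by (cases b)
  obtain k n where t: "t = (k,n)" by (cases t)
  have h: "i \<in> {1,2}" "1 \<le> p" "j \<in> {1,2}" "1 \<le> q" "k \<in> {1,2}"
    using assms unfolding a b t Idx_iff by auto
  show ?thesis unfolding a b t Lp_def Gf_def fst_conv snd_conv
    using ngraft_Lch[OF h(1,3,5,2,4), of n] by simp
qed

lemma prelie_delta: "prelie (delta a) (delta b) t = (if t \<in> Idx then of_nat (ngraft (Lp a) (Lp b) (Lp t)) else 0)"
  unfolding prelie_def supp_delta by (simp add: delta_def)

lemma nbr_delta:
  assumes "a \<in> Idx" "b \<in> Idx"
  shows "nbracket (delta a) (delta b) t = (if t \<in> Idx then Gf a b t - Gf b a t else 0)"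
  using assms by (simp add: nbracket_def prelie_delta ngraft_Idx)

lemma Gf_simp: "Gf (i,p) (j,q) (c,n) = (if n = p + q \<and> c = j \<and> (even q \<longleftrightarrow> i = j) then 1 else 0)"
  by (simp add: Gf_def)

lemma delta_pair: "delta (j,m) (c,n) = (if c = j \<and> n = m then 1 else 0)"
  by (auto simp: delta_def)

lemma claim1:
  assumes "i \<in> {1,2}" "j \<in> {1,2}" "k \<ge> 1" "l \<ge> 1"
  shows "nbracket (delta (i, 2*k)) (delta (j, 2*l)) = (\<lambda>_. 0)"
proof
  fix t :: "nat \<times> nat"
  obtain c n where t: "t = (c,n)" by (cases t)
  have a: "(i, 2*k) \<in> Idx" "(j, 2*l) \<in> Idx" using assms by (auto simp: Idx_iff)
  show "nbracket (delta (i, 2*k)) (delta (j, 2*l)) t = 0"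
    unfolding t nbr_delta[OF a] Gf_simp by auto
qed

lemma claim2:
  assumes "i \<in> {1,2}" "j \<in> {1,2}" "k \<ge> 1"
  shows "nbracket (delta (i, 2*k)) (delta (j, 2*l+1)) =
              (if i = j then (\<lambda>p. - delta (j, 2*(k+l)+1) p) else delta (j, 2*(k+l)+1))"
proof
  fix t :: "nat \<times> nat"
  obtain c n where t: "t = (c,n)" by (cases t)
  have a: "(i, 2*k) \<in> Idx" "(j, 2*l+1) \<in> Idx" using assms by (auto simp: Idx_iff)
  have j: "(j, 2*(k+l)+1) \<in> Idx" using assms by (auto simp: Idx_iff)
  show "nbracket (delta (i, 2*k)) (delta (j, 2*l+1)) t = (if i = j then (\<lambda>p. - delta (j, 2*(k+l)+1) p) else delta (j, 2*(k+l)+1)) t"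
  proof (cases "t \<in> Idx")
    case False
    then have "t \<noteq> (j, 2*(k+l)+1)" using j by auto
    then show ?thesis using False unfolding nbr_delta[OF a] by (simp add: delta_def)
  next
    case True
    show ?thesis using True unfolding nbr_delta[OF a] t Gf_simp by (auto simp: delta_def)
  qed
qed

lemma claim3:
  assumes "i \<in> {1,2}" "j \<in> {1,2}"
  shows "nbracket (delta (i, 2*k+1)) (delta (j, 2*l+1)) =
              (\<lambda>p. delta (j, 2*(k+l+1)) p - delta (i, 2*(k+l+1)) p)"
proof
  fix t :: "nat \<times> nat"
  obtain c n where t: "t = (c,n)" by (cases t)
  have a: "(i, 2*k+1) \<in> Idx" "(j, 2*l+1) \<in> Idx" using assms by (auto simp: Idx_iff)
  have j: "(j, 2*(k+l+1)) \<in> Idx" "(i, 2*(k+l+1)) \<in> Idx" using assms by (auto simp: Idx_iff)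
  show "nbracket (delta (i, 2*k+1)) (delta (j, 2*l+1)) t = delta (j, 2*(k+l+1)) t - delta (i, 2*(k+l+1)) t"
  proof (cases "t \<in> Idx")
    case False
    then have "t \<noteq> (j, 2*(k+l+1))" "t \<noteq> (i, 2*(k+l+1))" using j by auto
    then show ?thesis using False unfolding nbr_delta[OF a] by (simp add: delta_def)
  next
    case True
    show ?thesis using True unfolding nbr_delta[OF a] t Gf_simp delta_pair
      by (cases "i = j") (simp_all add: algebra_simps)
  qed
qed



lemma Emat_ent[simp]: "Emat i j $ a $ b = (if a = i \<and> b = j then 1 else 0)"
  by (simp add: Emat_def)

lemma smat_ent[simp]: "smat c M $ a $ b = c * M $ a $ b"
  by (simp add: smat_def)

lemma single_loop_ent[simp]: "single_loop d M m $ a $ b = (if m = d then M $ a $ b else 0)"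
  by (simp add: single_loop_def)



lemma Idx_cases:
  assumes "a \<in> Idx"
  obtains (o1) u where "a = (1, 2*u+1)" | (o2) u where "a = (2, 2*u+1)"
    | (e1) u where "a = (1, 2*u)" "u \<ge> 1" | (e2) u where "a = (2, 2*u)" "u \<ge> 1"
proof -
  obtain i n where a: "a = (i,n)" by (cases a)
  have h: "i = 1 \<or> i = 2" "1 \<le> n" using assms a by (auto simp: Idx_iff)
  show ?thesis
  proof (cases "even n")
    case True then obtain u where "n = 2*u" by auto
    then show ?thesis using h a e1 e2 by auto
  next
    case False then obtain u where "n = 2*u+1" using oddE by blast
    then show ?thesis using h a o1 o2 by auto
  qed
qed

lemma phib_o1: "phib (1, 2*u+1) = single_loop (int u) e_gl"
  by (simp add: phib_def)
lemma phib_o2: "phib (2, 2*u+1) = single_loop (int u + 1) f_gl"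
  by (simp add: phib_def)
lemma phib_e1: "phib (1, 2*u) = single_loop (int u) (- h1_gl)"
  by (simp add: phib_def)
lemma phib_e2: "phib (2, 2*u) = single_loop (int u) (- h2_gl)"
  by (simp add: phib_def)

lemmas gl_defs = e_gl_def f_gl_def h1_gl_def h2_gl_def

lemma phib_12: "a \<in> Idx \<Longrightarrow> phib a m $ 1 $ 2 = (if m \<ge> 0 \<and> a = (1, 2*nat m+1) then 1 else 0)"
  by (erule Idx_cases; hypsubst, unfold phib_o1 phib_o2 phib_e1 phib_e2; auto simp: gl_defs)
lemma phib_21: "a \<in> Idx \<Longrightarrow> phib a m $ 2 $ 1 = (if m \<ge> 1 \<and> a = (2, 2*nat m - 1) then 1 else 0)"
  by (erule Idx_cases; hypsubst, unfold phib_o1 phib_o2 phib_e1 phib_e2; auto simp: gl_defs)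
lemma phib_11: "a \<in> Idx \<Longrightarrow> phib a m $ 1 $ 1 = (if m \<ge> 1 \<and> a = (1, 2*nat m) then -1 else 0)"
  by (erule Idx_cases; hypsubst, unfold phib_o1 phib_o2 phib_e1 phib_e2; auto simp: gl_defs)
lemma phib_22: "a \<in> Idx \<Longrightarrow> phib a m $ 2 $ 2 = (if m \<ge> 1 \<and> a = (2, 2*nat m) then -1 else 0)"
  by (erule Idx_cases; hypsubst, unfold phib_o1 phib_o2 phib_e1 phib_e2; auto simp: gl_defs)

lemma sum_pick:
  assumes "finite (supp x)"
  shows "(\<Sum>a\<in>supp x. x a * (if P \<and> a = T then c else 0)) = (if P then x T * c else (0::rat))"
proof (cases P)
  case True
  have "(\<Sum>a\<in>supp x. x a * (if P \<and> a = T then c else 0)) = (\<Sum>a\<in>supp x. if a = T then x a * c else 0)"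
    using True by (intro sum.cong) auto
  also have "\<dots> = (if T \<in> supp x then x T * c else 0)" using assms by simp
  also have "\<dots> = x T * c" by (auto simp: supp_def)
  finally show ?thesis using True by simp
qed simp

definition PHI :: "(nat \<times> nat \<Rightarrow> rat) \<Rightarrow> int \<Rightarrow> rat^2^2" where
  "PHI x m = (\<chi> r s. if r = 1 then (if s = 1 then (if m \<ge> 1 then - x (1, 2*nat m) else 0)
                                      else (if m \<ge> 0 then x (1, 2*nat m+1) else 0))
                     else (if s = 1 then (if m \<ge> 1 then x (2, 2*nat m - 1) else 0)
                                      else (if m \<ge> 1 then - x (2, 2*nat m) else 0)))"

lemma two_ne[simp]: "(2::2) \<noteq> 1" "(1::2) \<noteq> 2"
  by (simp_all add: exhaust_2)

lemma PHI_ent[simp]: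
  "PHI x m $ 1 $ 1 = (if m \<ge> 1 then - x (1, 2*nat m) else 0)"
  "PHI x m $ 1 $ 2 = (if m \<ge> 0 then x (1, 2*nat m+1) else 0)"
  "PHI x m $ 2 $ 1 = (if m \<ge> 1 then x (2, 2*nat m - 1) else 0)"
  "PHI x m $ 2 $ 2 = (if m \<ge> 1 then - x (2, 2*nat m) else 0)"
  by (simp_all add: PHI_def)

lemma mat2_eq: "(A::rat^2^2) = B \<longleftrightarrow> A$1$1 = B$1$1 \<and> A$1$2 = B$1$2 \<and> A$2$1 = B$2$1 \<and> A$2$2 = B$2$2"
  by (auto simp: vec_eq_iff forall_2)

lemma phi_ent: "phi x m $ r $ s = (\<Sum>a\<in>supp x. x a * phib a m $ r $ s)"
  by (simp add: phi_def)

lemma nF_D: "x \<in> nF \<Longrightarrow> finite (supp x)" "x \<in> nF \<Longrightarrow> a \<in> supp x \<Longrightarrow> a \<in> Idx"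
  by (auto simp: nF_def)

lemma phi_PHI: assumes x: "x \<in> nF" shows "phi x m = PHI x m"
proof -
  have f: "finite (supp x)" using nF_D[OF x] by simp
  have I: "a \<in> supp x \<Longrightarrow> a \<in> Idx" for a using nF_D(2)[OF x] .
  have e12: "phi x m $ 1 $ 2 = PHI x m $ 1 $ 2"
    unfolding phi_ent PHI_ent
    by (subst sum.cong[OF refl, where h="\<lambda>a. x a * (if m \<ge> 0 \<and> a = (1, 2*nat m+1) then 1 else 0)"])
       (simp_all add: phib_12 I sum_pick[OF f])
  have e21: "phi x m $ 2 $ 1 = PHI x m $ 2 $ 1"
    unfolding phi_ent PHI_ent
    by (subst sum.cong[OF refl, where h="\<lambda>a. x a * (if m \<ge> 1 \<and> a = (2, 2*nat m - 1) then 1 else 0)"])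
       (simp_all add: phib_21 I sum_pick[OF f])
  have e11: "phi x m $ 1 $ 1 = PHI x m $ 1 $ 1"
    unfolding phi_ent PHI_ent
    by (subst sum.cong[OF refl, where h="\<lambda>a. x a * (if m \<ge> 1 \<and> a = (1, 2*nat m) then -1 else 0)"])
       (simp_all add: phib_11 I sum_pick[OF f])
  have e22: "phi x m $ 2 $ 2 = PHI x m $ 2 $ 2"
    unfolding phi_ent PHI_ent
    by (subst sum.cong[OF refl, where h="\<lambda>a. x a * (if m \<ge> 1 \<and> a = (2, 2*nat m) then -1 else 0)"])
       (simp_all add: phib_22 I sum_pick[OF f])
  show ?thesis using e11 e12 e21 e22 by (simp add: mat2_eq)
qed

lemma supp_add: "supp (\<lambda>p. x p + y p :: rat) \<subseteq> supp x \<union> supp y"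
  by (auto simp: supp_def)
lemma supp_scale: "supp (\<lambda>p. c * x p :: rat) \<subseteq> supp x"
  by (auto simp: supp_def)

lemma nF_add: "x \<in> nF \<Longrightarrow> y \<in> nF \<Longrightarrow> (\<lambda>p. x p + y p) \<in> nF"
  unfolding nF_def using supp_add[of x y] by (auto intro: finite_subset)
lemma nF_scale: "x \<in> nF \<Longrightarrow> (\<lambda>p. c * x p) \<in> nF"
  unfolding nF_def using supp_scale[of c x] by (auto intro: finite_subset)

lemma PHI_add: "PHI (\<lambda>p. x p + y p) m = PHI x m + PHI y m"
  by (simp add: mat2_eq)
lemma PHI_scale: "PHI (\<lambda>p. c * x p) m = smat c (PHI x m)"
  by (simp add: mat2_eq)
lemma PHI_sum: "PHI (\<lambda>t. \<Sum>i\<in>I. f i t) m = (\<Sum>i\<in>I. PHI (f i) m)"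
  by (cases "m \<ge> 1"; cases "m \<ge> 0"; simp add: mat2_eq sum_negf)

lemma phi_add: assumes "x \<in> nF" "y \<in> nF" shows "phi (\<lambda>p. x p + y p) = (\<lambda>m. phi x m + phi y m)"
  using phi_PHI[OF nF_add[OF assms]] phi_PHI[OF assms(1)] phi_PHI[OF assms(2)] by (intro ext) (simp add: PHI_add)
lemma phi_scale: assumes "x \<in> nF" shows "phi (\<lambda>p. c * x p) = (\<lambda>m. smat c (phi x m))"
  using phi_PHI[OF nF_scale[OF assms]] phi_PHI[OF assms(1)] by (intro ext) (simp add: PHI_scale)

lemma nF_zero_out: "x \<in> nF \<Longrightarrow> p \<notin> Idx \<Longrightarrow> x p = 0"
  by (auto simp: nF_def supp_def)

lemma phi_inj: "inj_on phi nF"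
proof (rule inj_onI)
  fix x y assume x: "x \<in> nF" and y: "y \<in> nF" and e: "phi x = phi y"
  have E: "PHI x m = PHI y m" for m using e x y by (metis phi_PHI)
  show "x = y"
  proof
    fix p
    show "x p = y p"
    proof (cases "p \<in> Idx")
      case False then show ?thesis using x y by (simp add: nF_zero_out)
    next
      case True then show ?thesis
      proof (cases rule: Idx_cases)
        case (o1 u) then show ?thesis using arg_cong[OF E[of "int u"], of "\<lambda>M. M $ 1 $ 2"] by simp
      next
        case (o2 u) then show ?thesis using arg_cong[OF E[of "int u + 1"], of "\<lambda>M. M $ 2 $ 1"] by (simp add: nat_add_distrib)
      next
        case (e1 u) then show ?thesis using arg_cong[OF E[of "int u"], of "\<lambda>M. M $ 1 $ 1"] by simp
      next
        case (e2 u) then show ?thesis using arg_cong[OF E[of "int u"], of "\<lambda>M. M $ 2 $ 2"] by simp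
      qed
    qed
  qed
qed

lemma nF_bound: assumes "x \<in> nF" obtains B :: nat where "\<And>p. B < snd p \<Longrightarrow> x p = 0"
proof -
  have "finite (snd ` supp x)" using nF_D(1)[OF assms] by simp
  then obtain B where B: "\<forall>n\<in>snd ` supp x. n \<le> B" using finite_nat_set_iff_bounded_le by blast
  have "x p = 0" if "B < snd p" for p
  proof (rule ccontr)
    assume "x p \<noteq> 0" then have "p \<in> supp x" by (simp add: supp_def)
    then show False using B that by force
  qed
  then show ?thesis using that by blast
qed

lemma phi_fun: "x \<in> nF \<Longrightarrow> phi x = PHI x"
  by (intro ext) (simp add: phi_PHI)

lemma PHI_in: assumes x: "x \<in> nF" shows "PHI x \<in> Lgl2plus"
proof -
  obtain B where B: "\<And>p. B < snd p \<Longrightarrow> x p = 0" using nF_bound[OF x] by blast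
  have neg: "PHI x m = 0" if "m < 0" for m using that by (simp add: mat2_eq)
  have big: "PHI x m = 0" if "int B < m" for m
  proof -
    have "B < 2 * nat m" "B < 2 * nat m + 1" "B < 2 * nat m - 1" using that by auto
    then show ?thesis using B by (simp add: mat2_eq)
  qed
  have "supp (PHI x) \<subseteq> {0..int B}"
  proof
    fix m assume "m \<in> supp (PHI x)"
    then have "PHI x m \<noteq> 0" by (simp add: supp_def)
    then show "m \<in> {0..int B}" using neg big by force
  qed
  then have "finite (supp (PHI x))" using finite_subset by blast
  moreover have "PHI x 0 = smat (x (1,1)) e_gl" by (simp add: mat2_eq gl_defs)
  ultimately show ?thesis unfolding Lgl2plus_def Lgl2_def using neg by auto
qed

definition PSI :: "(int \<Rightarrow> rat^2^2) \<Rightarrow> nat \<times> nat \<Rightarrow> rat" where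
  "PSI X p = (if fst p = 1 then (if odd (snd p) then X (int (snd p div 2)) $ 1 $ 2
                                 else if 2 \<le> snd p then - X (int (snd p div 2)) $ 1 $ 1 else 0)
              else if fst p = 2 then (if odd (snd p) then X (int (snd p div 2) + 1) $ 2 $ 1
                                 else if 2 \<le> snd p then - X (int (snd p div 2)) $ 2 $ 2 else 0)
              else 0)"

lemma Lgl2plus_bound: assumes X: "X \<in> Lgl2plus"
  obtains B :: int where "0 \<le> B" "\<And>m. B < m \<Longrightarrow> X m = 0"
proof -
  have f: "finite (supp X)" using X by (simp add: Lgl2plus_def Lgl2_def)
  define B where "B = Max (insert 0 (supp X))"
  have B0: "0 \<le> B" unfolding B_def using f by simp
  have "X m = 0" if "B < m" for m
  proof (rule ccontr)
    assume "X m \<noteq> 0" then have "m \<in> supp X" by (simp add: supp_def)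
    then have "m \<le> B" unfolding B_def using f by simp
    then show False using that by simp
  qed
  then show ?thesis using that B0 by blast
qed

lemma PSI_nF: assumes X: "X \<in> Lgl2plus" shows "PSI X \<in> nF"
proof -
  obtain B where B0: "0 \<le> B" and Xz: "\<And>m. B < m \<Longrightarrow> X m = 0" using Lgl2plus_bound[OF X] by blast
  have z: "PSI X p = 0" if "2 * nat B + 2 < snd p" for p
  proof -
    have "B < int (snd p div 2)" "B < int (snd p div 2) + 1" using that B0 by auto
    then show ?thesis by (simp add: PSI_def Xz)
  qed
  have s1: "supp (PSI X) \<subseteq> {1,2} \<times> {..2 * nat B + 2}"
  proof
    fix p assume "p \<in> supp (PSI X)"
    then have "PSI X p \<noteq> 0" by (simp add: supp_def)
    then have n0: "PSI X p \<noteq> 0" .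
    then have "fst p \<in> {1,2}" by (auto simp: PSI_def split: if_splits)
    moreover have "snd p \<le> 2 * nat B + 2"
    proof (rule ccontr)
      assume "\<not> snd p \<le> 2 * nat B + 2"
      then have "PSI X p = 0" by (intro z) simp
      then show False using n0 by simp
    qed
    ultimately
    show "p \<in> {1,2} \<times> {..2 * nat B + 2}" by (cases p) auto
  qed
  have s2: "supp (PSI X) \<subseteq> Idx"
  proof
    fix p assume "p \<in> supp (PSI X)"
    then have "PSI X p \<noteq> 0" by (simp add: supp_def)
    moreover have "odd (n::nat) \<Longrightarrow> Suc 0 \<le> n" for n by (cases n) auto
    ultimately have "fst p \<in> {1,2}" "1 \<le> snd p" by (auto simp: PSI_def split: if_splits)
    then show "p \<in> Idx" by (cases p) (simp add: Idx_iff)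
  qed
  show ?thesis unfolding nF_def using s1 s2 finite_subset by blast
qed

lemma PHI_PSI: assumes X: "X \<in> Lgl2plus" shows "PHI (PSI X) = X"
proof
  fix m
  have neg: "m < 0 \<Longrightarrow> X m = 0" and X0: "\<exists>c. X 0 = smat c e_gl" using X by (auto simp: Lgl2plus_def)
  show "PHI (PSI X) m = X m"
  proof (cases "m < 0")
    case True then show ?thesis using neg by (simp add: mat2_eq)
  next
    case False
    show ?thesis
    proof (cases "m = 0")
      case True
      obtain c where c: "X 0 = smat c e_gl" using X0 by blast
      show ?thesis unfolding True mat2_eq using c by (simp add: gl_defs PSI_def)
    next
      case False
      then have m1: "1 \<le> m" using \<open>\<not> m < 0\<close> by simp
      have a: "odd (2*nat m - 1)" "int ((2 * nat m - Suc 0) div 2) + 1 = m"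
        "(2 * nat m + 1) div 2 = nat m" "odd (2 * nat m + 1)" "\<not> odd (2 * nat m)" "2 \<le> 2 * nat m"
        "int (nat m) = m" using m1 by auto
      show ?thesis unfolding mat2_eq PHI_ent using m1 by (simp add: PSI_def a)
    qed
  qed
qed

lemma phi_bij: "bij_betw phi nF Lgl2plus"
proof -
  have "phi ` nF = Lgl2plus"
  proof
    show "phi ` nF \<subseteq> Lgl2plus" using PHI_in phi_fun by auto
    show "Lgl2plus \<subseteq> phi ` nF"
    proof
      fix X assume X: "X \<in> Lgl2plus"
      have "phi (PSI X) = X" using phi_fun[OF PSI_nF[OF X]] PHI_PSI[OF X] by simp
      then show "X \<in> phi ` nF" using PSI_nF[OF X] by force
    qed
  qed
  then show ?thesis using phi_inj by (simp add: bij_betw_def)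
qed



lemma mmult_ent: "((A::rat^2^2) ** B) $ i $ j = A$i$1 * B$1$j + A$i$2 * B$2$j"
  by (simp add: matrix_matrix_mult_def sum_2)

lemma Lbracket_sup:
  assumes "finite P" "supp X \<subseteq> P"
  shows "Lbracket X Y m = (\<Sum>p\<in>P. X p ** Y (m - p) - Y (m - p) ** X p)"
  unfolding Lbracket_def
  by (rule sum.mono_neutral_left) (use assms in \<open>auto simp: supp_def\<close>)

lemma single_loop_bracket:
  "Lbracket (single_loop d A) (single_loop d' B) m = (if m = d + d' then A ** B - B ** A else 0)"
proof -
  have s: "supp (single_loop d A) \<subseteq> {d}" by (auto simp: supp_def single_loop_def)
  show ?thesis by (subst Lbracket_sup[OF _ s]) (auto simp: single_loop_def)
qed

lemma nF_delta: "a \<in> Idx \<Longrightarrow> delta a \<in> nF"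
  by (simp add: nF_def)

lemma PHI_delta: "T \<in> Idx \<Longrightarrow> PHI (delta T) m = phib T m"
proof -
  assume T: "T \<in> Idx"
  have "PHI (delta T) m = phi (delta T) m" using phi_PHI[OF nF_delta[OF T]] by simp
  also have "\<dots> = phib T m" unfolding phi_def supp_delta by (simp add: mat2_eq delta_def)
  finally show ?thesis .
qed

lemma PHI_neg: "PHI (\<lambda>p. - x p) m = - PHI x m"
  by (simp add: mat2_eq)
lemma PHI_diff: "PHI (\<lambda>p. x p - y p) m = PHI x m - PHI y m"
  by (simp add: mat2_eq)
lemma PHI_zero: "PHI (\<lambda>p. 0) m = 0"
  by (simp add: mat2_eq)

lemma nbr_anti: "nbracket x y = (\<lambda>t. - nbracket y x t)"
  by (simp add: nbracket_def)

lemma bh_oo: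
  assumes i: "i \<in> {1,2}" and j: "j \<in> {1,2}"
  shows "PHI (nbracket (delta (i, 2*u+1)) (delta (j, 2 * v + 1))) m = Lbracket (phib (i,2*u+1)) (phib (j,2 * v + 1)) m"
  unfolding claim3[OF i j] PHI_diff
  using i j by (auto simp: PHI_delta Idx_iff phib_def single_loop_bracket mat2_eq mmult_ent gl_defs)

lemma bh_eo:
  assumes i: "i \<in> {1,2}" and j: "j \<in> {1,2}"
  shows "PHI (nbracket (delta (i, 2*(w+1))) (delta (j, 2 * v + 1))) m = Lbracket (phib (i,2*(w+1))) (phib (j,2 * v + 1)) m"
  unfolding claim2[OF i j le_add2] 
  using i j by (elim insertE emptyE; simp add: PHI_delta PHI_neg Idx_iff phib_def single_loop_bracket mat2_eq mmult_ent gl_defs)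

lemma bh_oe:
  assumes i: "i \<in> {1,2}" and j: "j \<in> {1,2}"
  shows "PHI (nbracket (delta (i, 2*u+1)) (delta (j, 2*(w+1)))) m = Lbracket (phib (i,2*u+1)) (phib (j,2*(w+1))) m"
  apply (subst nbr_anti)
  unfolding claim2[OF j i le_add2] 
  using i j by (elim insertE emptyE; simp add: PHI_delta PHI_neg Idx_iff phib_def single_loop_bracket mat2_eq mmult_ent gl_defs)

lemma bh_ee:
  assumes i: "i \<in> {1,2}" and j: "j \<in> {1,2}"
  shows "PHI (nbracket (delta (i, 2*(w+1))) (delta (j, 2*(v+1)))) m = Lbracket (phib (i,2*(w+1))) (phib (j,2*(v+1))) m"
  unfolding claim1[OF i j le_add2 le_add2]
  using i j by (auto simp: PHI_zero Idx_iff phib_def single_loop_bracket mat2_eq mmult_ent gl_defs)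

lemma basis_hom:
  assumes a: "a \<in> Idx" and b: "b \<in> Idx"
  shows "PHI (nbracket (delta a) (delta b)) m = Lbracket (phib a) (phib b) m"
proof -
  have evcase: "\<exists>w. u = w + 1" if "(1::nat) \<le> u" for u using that by presburger
  show ?thesis using a
  proof (cases rule: Idx_cases)
    case (o1 u) note A = this
    show ?thesis using b
    proof (cases rule: Idx_cases)
      case (o1 v) then show ?thesis using A bh_oo by simp
    next
      case (o2 v) then show ?thesis using A bh_oo by simp
    next
      case (e1 v) then obtain w where "v = w + 1" using evcase by blast
      then show ?thesis using A e1 bh_oe by simp
    next
      case (e2 v) then obtain w where "v = w + 1" using evcase by blast
      then show ?thesis using A e2 bh_oe by simp
    qed
  next
    case (o2 u) note A = this
    show ?thesis using b
    proof (cases rule: Idx_cases)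
      case (o1 v) then show ?thesis using A bh_oo by simp
    next
      case (o2 v) then show ?thesis using A bh_oo by simp
    next
      case (e1 v) then obtain w where "v = w + 1" using evcase by blast
      then show ?thesis using A e1 bh_oe by simp
    next
      case (e2 v) then obtain w where "v = w + 1" using evcase by blast
      then show ?thesis using A e2 bh_oe by simp
    qed
  next
    case (e1 u) then obtain w' where W: "u = w' + 1" using evcase by blast
    note A = e1
    show ?thesis using b
    proof (cases rule: Idx_cases)
      case (o1 v) then show ?thesis using A W bh_eo by simp
    next
      case (o2 v) then show ?thesis using A W bh_eo by simp
    next
      case (e1 v) then obtain w where "v = w + 1" using evcase by blast
      then show ?thesis using A e1 W bh_ee by simp
    next
      case (e2 v) then obtain w where "v = w + 1" using evcase by blast
      then show ?thesis using A e2 W bh_ee by simp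
    qed
  next
    case (e2 u) then obtain w' where W: "u = w' + 1" using evcase by blast
    note A = e2
    show ?thesis using b
    proof (cases rule: Idx_cases)
      case (o1 v) then show ?thesis using A W bh_eo by simp
    next
      case (o2 v) then show ?thesis using A W bh_eo by simp
    next
      case (e1 v) then obtain w where "v = w + 1" using evcase by blast
      then show ?thesis using A e1 W bh_ee by simp
    next
      case (e2 v) then obtain w where "v = w + 1" using evcase by blast
      then show ?thesis using A e2 W bh_ee by simp
    qed
  qed
qed

lemma prelie_expand: "prelie x y t = (\<Sum>a\<in>supp x. \<Sum>b\<in>supp y. x a * y b * prelie (delta a) (delta b) t)"
  unfolding prelie_delta by (simp add: prelie_def)

lemma nbr_expand: "nbracket x y t = (\<Sum>a\<in>supp x. \<Sum>b\<in>supp y. x a * y b * nbracket (delta a) (delta b) t)"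
proof -
  have "prelie y x t = (\<Sum>b\<in>supp y. \<Sum>a\<in>supp x. y b * x a * prelie (delta b) (delta a) t)"
    by (rule prelie_expand)
  also have "\<dots> = (\<Sum>a\<in>supp x. \<Sum>b\<in>supp y. x a * y b * prelie (delta b) (delta a) t)"
    by (subst sum.swap) (simp add: mult.commute)
  finally show ?thesis unfolding nbracket_def
    by (simp add: prelie_expand[of x y t] sum_subtractf[symmetric] right_diff_distrib)
qed

lemma supp_bound: "x \<in> nF \<Longrightarrow> (\<And>p. B < snd p \<Longrightarrow> x p = 0) \<Longrightarrow> a \<in> supp x \<Longrightarrow> snd a \<le> B"
proof -
  assume x: "x \<in> nF" and B: "\<And>p. B < snd p \<Longrightarrow> x p = 0" and a: "a \<in> supp x"
  have "x a \<noteq> 0" using a by (simp add: supp_def)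
  then show "snd a \<le> B" using B[of a] by fastforce
qed

lemma nF_nbracket: assumes x: "x \<in> nF" and y: "y \<in> nF" shows "nbracket x y \<in> nF"
proof -
  obtain Bx where Bx: "\<And>p. Bx < snd p \<Longrightarrow> x p = 0" using nF_bound[OF x] by blast
  obtain By where By: "\<And>p. By < snd p \<Longrightarrow> y p = 0" using nF_bound[OF y] by blast
  have z: "nbracket x y t = 0" if "Bx + By < snd t" for t
  proof -
    have "nbracket (delta a) (delta b) t = 0" if a: "a \<in> supp x" and b: "b \<in> supp y" for a b
    proof -
      have "snd a \<le> Bx" "snd b \<le> By" using supp_bound[OF x Bx a] supp_bound[OF y By b] by auto
      then have "snd t \<noteq> snd a + snd b" "snd t \<noteq> snd b + snd a" using \<open>Bx + By < snd t\<close> by auto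
      moreover have "a \<in> Idx" "b \<in> Idx" using a b x y by (auto simp: nF_def)
      ultimately show ?thesis by (simp add: nbr_delta Gf_def)
    qed
    then show ?thesis by (subst nbr_expand) simp
  qed
  have zi: "nbracket x y t = 0" if "t \<notin> Idx" for t
    using that by (simp add: nbracket_def prelie_def)
  have "supp (nbracket x y) \<subseteq> Idx \<inter> {t. snd t \<le> Bx + By}"
  proof
    fix t assume "t \<in> supp (nbracket x y)"
    then have "nbracket x y t \<noteq> 0" by (simp add: supp_def)
    then have "t \<in> Idx" "\<not> Bx + By < snd t" using z zi by blast+
    then show "t \<in> Idx \<inter> {t. snd t \<le> Bx + By}" by simp
  qed
  also have "\<dots> \<subseteq> {1,2} \<times> {..Bx+By}" by (auto simp: Idx_def)
  finally have f: "supp (nbracket x y) \<subseteq> {1,2} \<times> {..Bx+By}" .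
  have "supp (nbracket x y) \<subseteq> Idx" using zi by (auto simp: supp_def)
  then show ?thesis unfolding nF_def using f finite_subset by blast
qed

lemma phi_nbr:
  assumes x: "x \<in> nF" and y: "y \<in> nF"
  shows "phi (nbracket x y) m = (\<Sum>a\<in>supp x. \<Sum>b\<in>supp y. smat (x a * y b) (Lbracket (phib a) (phib b) m))"
proof -
  have e: "nbracket x y = (\<lambda>t. \<Sum>a\<in>supp x. \<Sum>b\<in>supp y. x a * y b * nbracket (delta a) (delta b) t)"
    by (intro ext) (rule nbr_expand)
  have "phi (nbracket x y) m = PHI (nbracket x y) m" by (rule phi_PHI[OF nF_nbracket[OF x y]])
  also have "\<dots> = (\<Sum>a\<in>supp x. \<Sum>b\<in>supp y. smat (x a * y b) (PHI (nbracket (delta a) (delta b)) m))"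
    unfolding e PHI_sum PHI_scale ..
  also have "\<dots> = (\<Sum>a\<in>supp x. \<Sum>b\<in>supp y. smat (x a * y b) (Lbracket (phib a) (phib b) m))"
    using x y by (intro sum.cong refl) (simp add: basis_hom nF_D(2))
  finally show ?thesis .
qed

lemma smat_sum: "smat c (\<Sum>i\<in>I. A i) = (\<Sum>i\<in>I. smat c (A i))"
  by (simp add: mat2_eq sum_distrib_left)
lemma mmult_sum_left: "(\<Sum>i\<in>I. (A i :: rat^2^2)) ** (B::rat^2^2) = (\<Sum>i\<in>I. A i ** B)"
  by (simp add: mat2_eq mmult_ent sum_distrib_right sum.distrib)
lemma mmult_sum_right: "(B::rat^2^2) ** (\<Sum>i\<in>I. (A i :: rat^2^2)) = (\<Sum>i\<in>I. B ** A i)"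
  by (simp add: mat2_eq mmult_ent sum_distrib_left sum.distrib)
lemma smat_mmult_left: "smat c A ** (B::rat^2^2) = smat c (A ** B)"
  by (simp add: mat2_eq mmult_ent algebra_simps)
lemma smat_mmult_right: "(A::rat^2^2) ** smat c B = smat c (A ** B)"
  by (simp add: mat2_eq mmult_ent algebra_simps)
lemma smat_smat: "smat c (smat d A) = smat (c * d) A"
  by (simp add: mat2_eq)
lemma smat_diff: "smat c (A - B) = smat c A - smat c B"
  by (simp add: mat2_eq algebra_simps)
lemma smat_zero: "smat c 0 = 0"
  by (simp add: mat2_eq)

lemma comm_expand:
  "(\<Sum>a\<in>A. smat (c a) (X a)) ** (\<Sum>b\<in>B. smat (d b) (Y b)) - (\<Sum>b\<in>B. smat (d b) (Y b)) ** (\<Sum>a\<in>A. smat (c a) (X a))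
   = (\<Sum>a\<in>A. \<Sum>b\<in>B. smat (c a * d b) (X a ** Y b - Y b ** X a))"
proof -
  have 1: "(\<Sum>a\<in>A. smat (c a) (X a)) ** (\<Sum>b\<in>B. smat (d b) (Y b)) = (\<Sum>a\<in>A. \<Sum>b\<in>B. smat (c a * d b) (X a ** Y b))"
    by (simp only: mmult_sum_left) (simp add: mmult_sum_right smat_mmult_left smat_mmult_right smat_smat smat_sum mult.commute)
  have 2: "(\<Sum>b\<in>B. smat (d b) (Y b)) ** (\<Sum>a\<in>A. smat (c a) (X a)) = (\<Sum>a\<in>A. \<Sum>b\<in>B. smat (c a * d b) (Y b ** X a))"
    by (simp only: mmult_sum_right) (simp add: mmult_sum_left smat_mmult_left smat_mmult_right smat_smat smat_sum mult.commute)
  show ?thesis unfolding 1 2 by (simp add: sum_subtractf[symmetric] smat_diff)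
qed

lemma phib_supp: "a \<in> Idx \<Longrightarrow> p \<notin> {0..int (snd a)} \<Longrightarrow> phib a p = 0"
  by (erule Idx_cases; hypsubst, unfold phib_o1 phib_o2 phib_e1 phib_e2; auto simp: single_loop_def)

lemma Lbr_phi:
  assumes x: "x \<in> nF" and y: "y \<in> nF"
  shows "Lbracket (phi x) (phi y) m = (\<Sum>a\<in>supp x. \<Sum>b\<in>supp y. smat (x a * y b) (Lbracket (phib a) (phib b) m))"
proof -
  obtain Bx where Bx: "\<And>p. Bx < snd p \<Longrightarrow> x p = 0" using nF_bound[OF x] by blast
  define P where "P = {0..int Bx}"
  have fP: "finite P" by (simp add: P_def)
  have hsa: "supp (phib a) \<subseteq> P" if a: "a \<in> supp x" for a
  proof
    fix p assume p: "p \<in> supp (phib a)"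
    have "snd a \<le> Bx" using supp_bound[OF x Bx a] .
    moreover have "a \<in> Idx" using a x by (auto simp: nF_def)
    ultimately show "p \<in> P" using p phib_supp[of a p] unfolding P_def supp_def by fastforce
  qed
  have hsx: "supp (phi x) \<subseteq> P"
  proof
    fix p assume p: "p \<in> supp (phi x)"
    show "p \<in> P"
    proof (rule ccontr)
      assume np: "p \<notin> P"
      have "phib a p = 0" if "a \<in> supp x" for a using hsa[OF that] np by (auto simp: supp_def)
      then have "phi x p = 0" unfolding phi_def by (simp add: smat_zero)
      then show False using p by (simp add: supp_def)
    qed
  qed
  have "Lbracket (phi x) (phi y) m = (\<Sum>p\<in>P. phi x p ** phi y (m - p) - phi y (m - p) ** phi x p)"
    by (rule Lbracket_sup[OF fP hsx])
  also have "\<dots> = (\<Sum>p\<in>P. \<Sum>a\<in>supp x. \<Sum>b\<in>supp y. smat (x a * y b) (phib a p ** phib b (m - p) - phib b (m - p) ** phib a p))"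
    unfolding phi_def by (simp only: comm_expand)
  also have "\<dots> = (\<Sum>a\<in>supp x. \<Sum>b\<in>supp y. smat (x a * y b) (\<Sum>p\<in>P. phib a p ** phib b (m - p) - phib b (m - p) ** phib a p))"
    by (simp add: smat_sum sum.swap[of _ P])
  also have "\<dots> = (\<Sum>a\<in>supp x. \<Sum>b\<in>supp y. smat (x a * y b) (Lbracket (phib a) (phib b) m))"
    by (intro sum.cong refl) (simp add: Lbracket_sup[OF fP hsa])
  finally show ?thesis .
qed

lemma hom: "x \<in> nF \<Longrightarrow> y \<in> nF \<Longrightarrow> phi (nbracket x y) = Lbracket (phi x) (phi y)"
  by (intro ext) (simp add: phi_nbr Lbr_phi)


theorem mainTheorem5:
  shows "(\<forall>i\<in>{1,2}. \<forall>j\<in>{1,2}. \<forall>k\<ge>1. \<forall>l\<ge>1.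
            nbracket (delta (i, 2*k)) (delta (j, 2*l)) = (\<lambda>_. 0))
    \<and> (\<forall>i\<in>{1,2}. \<forall>j\<in>{1,2}. \<forall>k\<ge>1. \<forall>l.
            nbracket (delta (i, 2*k)) (delta (j, 2*l+1)) =
              (if i = j then (\<lambda>p. - delta (j, 2*(k+l)+1) p) else delta (j, 2*(k+l)+1)))
    \<and> (\<forall>i\<in>{1,2}. \<forall>j\<in>{1,2}. \<forall>k l.
            nbracket (delta (i, 2*k+1)) (delta (j, 2*l+1)) =
              (\<lambda>p. delta (j, 2*(k+l+1)) p - delta (i, 2*(k+l+1)) p))
    \<and> (\<forall>x\<in>nF. \<forall>y\<in>nF. phi (\<lambda>p. x p + y p) = (\<lambda>m. phi x m + phi y m))
    \<and> (\<forall>c. \<forall>x\<in>nF. phi (\<lambda>p. c * x p) = (\<lambda>m. smat c (phi x m)))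
    \<and> bij_betw phi nF Lgl2plus
    \<and> (\<forall>x\<in>nF. \<forall>y\<in>nF. phi (nbracket x y) = Lbracket (phi x) (phi y))"
proof -
  have c1: "\<forall>i\<in>{1,2}. \<forall>j\<in>{1,2}. \<forall>k\<ge>1. \<forall>l\<ge>1.
            nbracket (delta (i, 2*k)) (delta (j, 2*l)) = (\<lambda>_. 0)"
    using claim1 by blast
  have c2: "\<forall>i\<in>{1,2}. \<forall>j\<in>{1,2}. \<forall>k\<ge>1. \<forall>l.
            nbracket (delta (i, 2*k)) (delta (j, 2*l+1)) =
              (if i = j then (\<lambda>p. - delta (j, 2*(k+l)+1) p) else delta (j, 2*(k+l)+1))"
    using claim2 by blast
  have c3: "\<forall>i\<in>{1,2}. \<forall>j\<in>{1,2}. \<forall>k l.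
            nbracket (delta (i, 2*k+1)) (delta (j, 2*l+1)) =
              (\<lambda>p. delta (j, 2*(k+l+1)) p - delta (i, 2*(k+l+1)) p)"
    using claim3 by blast
  show ?thesis using c1 c2 c3 phi_add phi_scale phi_bij hom by blast
qed

end
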